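(* Consider a stochastic $K$-armed bandit with reward vectors in $[-R_{\max},R_{\max}]^K$ drawn i.i.d. with mean $\mathbf r$ having no ties, optimal arm $a^*$ with deterministic policy $\pi^*$, and $\Delta=\min_{a\ne a'}|r(a)-r(a')|$. Given a horizon $T$ (and target accuracy $\epsilon>0$), choosing the learning rate $\alpha=\mathcal O(T^{-3/7})$ and the barrier parameter $\eta=\mathcal O(T^{1/7})$, LB-SGB (defined in the context) ensures sub-linear regret: $$\mathbb E\Big[\sum_{t=1}^T(\pi^*-\pi_{\boldsymbol\theta_t})^\top\mathbf r\Big]\le\mathcal O\big(\Delta^{-2/7}T^{6/7}\big).$$
   Context: Softmax policy $\pi_{\boldsymbol\theta}(a)=e^{\theta(a)}/\sum_be^{\theta(b)}$. LB-SGB with step size $\alpha$ and barrier parameter $\eta$: start from $\boldsymbol\theta=\mathbf 0$; at round $t$ sample $a_t\sim\pi_{\boldsymbol\theta_t}$, observe $R_t(a_t)$, set $\hat r_t(a)=\mathbb I\{a_t=a\}R_t(a_t)/\pi_{\boldsymbol\theta_t}(a)$ and update $\boldsymbol\theta_{t+1}=\boldsymbol\theta_t+\alpha\big[(\mathrm{diag}(\pi_{\boldsymbol\theta_t})-\pi_{\boldsymbol\theta_t}\pi_{\boldsymbol\theta_t}^\top)\hat{\mathbf r}_t+\frac1\eta(\mathbf 1-K\pi_{\boldsymbol\theta_t})\big]$. The hyperparameters depend on the horizon $T$. *)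

theory Defs
  imports "HOL-Probability.Probability"
begin

text \<open>Arms are the elements of a finite type 'k; K = CARD('k).
  Parameters, policies and reward vectors live in real^'k.\<close>

definition softmax :: "real^'k::finite \<Rightarrow> real^'k" where
  "softmax \<theta> = (\<chi> a. exp (\<theta>$a) / (\<Sum>b\<in>UNIV. exp (\<theta>$b)))"

definition rhat :: "real^'k::finite \<Rightarrow> 'k \<Rightarrow> real \<Rightarrow> real^'k" where
  "rhat \<theta> act x = (\<chi> a. if act = a then x / softmax \<theta> $ a else 0)"

text \<open>One LB-SGB update:
  theta + alpha * [ (diag(pi) - pi pi^T) rhat + (1/eta)(1 - K pi) ].\<close>
definition lbsgb_step :: "real \<Rightarrow> real \<Rightarrow> real^'k::finite \<Rightarrow> 'k \<Rightarrow> real \<Rightarrow> real^'k" where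
  "lbsgb_step \<alpha> \<eta> \<theta> act x =
     (let p = softmax \<theta>; rh = rhat \<theta> act x in
      \<theta> + \<alpha> *\<^sub>R ((\<chi> a. p$a * rh$a - p$a * (\<Sum>b\<in>UNIV. p$b * rh$b))
                 + (1 / \<eta>) *\<^sub>R (\<chi> a. 1 - real CARD('k) * p$a)))"

text \<open>Optimal arm (unique when the mean has no ties) and the deterministic optimal policy.\<close>
definition opt_arm :: "real^'k::finite \<Rightarrow> 'k" where
  "opt_arm r = (THE a. \<forall>b. r$b \<le> r$a)"

definition pi_star :: "real^'k::finite \<Rightarrow> real^'k" where
  "pi_star r = (\<chi> a. if a = opt_arm r then 1 else 0)"

definition inst_regret :: "real^'k::finite \<Rightarrow> real^'k \<Rightarrow> real" where
  "inst_regret r \<theta> = (pi_star r - softmax \<theta>) \<bullet> r"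

definition mean_reward :: "(real^'k::finite) measure \<Rightarrow> real^'k" where
  "mean_reward D = integral\<^sup>L D (\<lambda>R. R)"

text \<open>Expected cumulative regret of n further rounds of LB-SGB started at parameter theta,
  where in each round a ~ softmax theta, a fresh reward vector R ~ D is drawn
  (i.i.d. across rounds) and the update uses R(a).  This is the expectation over the
  whole random trajectory, written via the tower property (backward recursion).\<close>
primrec exp_regret :: "(real^'k::finite) measure \<Rightarrow> real \<Rightarrow> real \<Rightarrow> nat \<Rightarrow> real^'k \<Rightarrow> real" where
  "exp_regret D \<alpha> \<eta> 0 \<theta> = 0"
| "exp_regret D \<alpha> \<eta> (Suc n) \<theta> =
     inst_regret (mean_reward D) \<theta>
     + (\<Sum>a\<in>UNIV. softmax \<theta> $ a *
          integral\<^sup>L D (\<lambda>R. exp_regret D \<alpha> \<eta> n (lbsgb_step \<alpha> \<eta> \<theta> a (R$a))))"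

definition gap :: "real^'k::finite \<Rightarrow> real" where
  "gap r = Min {\<bar>r$a - r$b\<bar> | a b. a \<noteq> b}"

end

theory Submission
  imports Defs
begin

abbreviation KK :: "'k::finite itself \<Rightarrow> real" where "KK _ \<equiv> real CARD('k)"

lemma Z_pos: "(\<Sum>b\<in>UNIV. exp ((\<theta>::real^'k::finite)$b)) > 0"
  by (rule sum_pos) auto

lemma softmax_pos: "softmax (\<theta>::real^'k::finite) $ a > 0"
  unfolding softmax_def using Z_pos[of \<theta>] by simp

lemma softmax_sum: "(\<Sum>b\<in>UNIV. softmax (\<theta>::real^'k::finite) $ b) = 1"
  unfolding softmax_def using Z_pos[of \<theta>] by (simp add: sum_divide_distrib[symmetric])

lemma ln_softmax: "ln (softmax (\<theta>::real^'k::finite) $ a) = \<theta>$a - ln (\<Sum>b\<in>UNIV. exp (\<theta>$b))"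
  unfolding softmax_def using Z_pos[of \<theta>] by (simp add: ln_div)

lemma softmax_shift:
  fixes \<theta> \<Delta> :: "real^'k::finite"
  shows "softmax (\<theta> + \<Delta>) $ a = softmax \<theta> $ a * exp (\<Delta>$a) / (\<Sum>c\<in>UNIV. softmax \<theta> $ c * exp (\<Delta>$c))"
proof -
  define Z where "Z = (\<Sum>b\<in>UNIV. exp (\<theta>$b))"
  have Z: "Z > 0" unfolding Z_def by (rule Z_pos)
  have "(\<Sum>c\<in>UNIV. softmax \<theta> $ c * exp (\<Delta>$c)) = (\<Sum>c\<in>UNIV. exp (\<theta>$c + \<Delta>$c)) / Z"
    unfolding softmax_def Z_def[symmetric] by (simp add: sum_divide_distrib exp_add)
  moreover have "(\<Sum>c\<in>UNIV. exp (\<theta>$c + \<Delta>$c)) > 0" by (rule sum_pos) auto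
  ultimately show ?thesis using Z
    unfolding softmax_def Z_def[symmetric] by (simp add: exp_add field_simps)
qed

lemma exp_quad_bound:
  fixes x :: real assumes "\<bar>x\<bar> \<le> 1" shows "exp x \<le> 1 + x + x\<^sup>2"
proof (cases "x \<ge> 0")
  case True thus ?thesis using exp_bound[of x] assms by auto
next
  case False
  define y where "y = - x"
  have y: "0 \<le> y" "y \<le> 1" using False assms y_def by auto
  have e: "1 + y + y\<^sup>2/2 \<le> exp y" using exp_lower_Taylor_quadratic[OF y(1)] .
  have pos: "1 + y + y\<^sup>2/2 > 0" using y zero_le_power2[of y] by linarith
  have "(1 - y + y\<^sup>2) * (1 + y + y\<^sup>2/2) \<ge> 1"
  proof -
    have "(1 - y + y\<^sup>2) * (1 + y + y\<^sup>2/2) = 1 + y\<^sup>2/2 + y^3/2 + y^4/2"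
      by (simp add: field_simps power2_eq_square power3_eq_cube power4_eq_xxxx)
    moreover have "y\<^sup>2 \<ge> 0" "y^3 \<ge> 0" "y^4 \<ge> 0" using y by auto
    ultimately show ?thesis by linarith
  qed
  hence "(1 - y + y\<^sup>2) * exp y \<ge> 1"
    using e y by (smt (verit) mult_left_mono zero_le_power2)
  hence "exp (-y) \<le> 1 - y + y\<^sup>2" by (simp add: exp_minus field_simps)
  thus ?thesis unfolding y_def by simp
qed

lemma wavg_abs:
  fixes p f :: "'a \<Rightarrow> real"
  assumes "finite A" "\<And>b. b \<in> A \<Longrightarrow> p b \<ge> 0" "sum p A = 1" "\<And>b. b \<in> A \<Longrightarrow> \<bar>f b\<bar> \<le> c"
  shows "\<bar>\<Sum>b\<in>A. p b * f b\<bar> \<le> c"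
proof -
  have "\<bar>\<Sum>b\<in>A. p b * f b\<bar> \<le> (\<Sum>b\<in>A. \<bar>p b * f b\<bar>)" by (rule sum_abs)
  also have "\<dots> \<le> (\<Sum>b\<in>A. p b * c)"
    by (rule sum_mono) (use assms in \<open>auto simp: abs_mult intro: mult_left_mono\<close>)
  also have "\<dots> = c" using assms(3) by (simp add: sum_distrib_right[symmetric])
  finally show ?thesis .
qed

definition rbar :: "real^'k::finite \<Rightarrow> real^'k \<Rightarrow> real" where
  "rbar r \<theta> = (\<Sum>b\<in>UNIV. softmax \<theta> $ b * r$b)"

definition Jf :: "real \<Rightarrow> real^'k::finite \<Rightarrow> real^'k \<Rightarrow> real" where
  "Jf \<eta> r \<theta> = rbar r \<theta> + (1/\<eta>) * (\<Sum>b\<in>UNIV. ln (softmax \<theta> $ b))"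

definition grd :: "real \<Rightarrow> real^'k::finite \<Rightarrow> real^'k \<Rightarrow> 'k \<Rightarrow> real" where
  "grd \<eta> r \<theta> b = softmax \<theta> $ b * (r$b - rbar r \<theta>) + (1/\<eta>) * (1 - real CARD('k) * softmax \<theta> $ b)"

lemma B_part:
  fixes \<theta> \<Delta> :: "real^'k::finite"
  assumes D: "\<And>b. \<bar>\<Delta>$b\<bar> \<le> \<delta>" and d1: "\<delta> \<le> 1"
  shows "(\<Sum>b\<in>UNIV. ln (softmax (\<theta>+\<Delta>) $ b)) \<ge> (\<Sum>b\<in>UNIV. ln (softmax \<theta> $ b))
           + (\<Sum>b\<in>UNIV. (1 - real CARD('k) * softmax \<theta> $ b) * \<Delta>$b) - real CARD('k) * \<delta>\<^sup>2"
proof -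
  define p where "p = softmax \<theta>"
  define m where "m = (\<Sum>c\<in>UNIV. p $ c * exp (\<Delta>$c))"
  have pp: "p$b > 0" for b unfolding p_def by (rule softmax_pos)
  have ps: "(\<Sum>b\<in>UNIV. p$b) = 1" unfolding p_def by (rule softmax_sum)
  have mpos: "m > 0" unfolding m_def by (rule sum_pos) (auto intro: pp mult_pos_pos)
  have l: "ln (softmax (\<theta>+\<Delta>) $ b) = ln (p$b) + \<Delta>$b - ln m" for b
    unfolding softmax_shift p_def[symmetric] m_def[symmetric] using pp[of b] mpos
    by (simp add: ln_div ln_mult)
  have "ln m \<le> m - 1" using mpos by (rule ln_le_minus_one)
  also have "m - 1 = (\<Sum>c\<in>UNIV. p $ c * (exp (\<Delta>$c) - 1))"
    unfolding m_def using ps by (simp add: algebra_simps sum_subtractf)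
  also have "\<dots> \<le> (\<Sum>c\<in>UNIV. p $ c * (\<Delta>$c + \<delta>\<^sup>2))"
  proof (rule sum_mono)
    fix c :: 'k
    have "\<bar>\<Delta>$c\<bar> \<le> 1" using D[of c] d1 by linarith
    hence "exp (\<Delta>$c) - 1 \<le> \<Delta>$c + (\<Delta>$c)\<^sup>2" using exp_quad_bound by force
    moreover have "(\<Delta>$c)\<^sup>2 \<le> \<delta>\<^sup>2" using D[of c] by (metis abs_ge_zero order_trans power2_abs power_mono)
    ultimately show "p $ c * (exp (\<Delta>$c) - 1) \<le> p $ c * (\<Delta>$c + \<delta>\<^sup>2)"
      using pp[of c] by (intro mult_left_mono) auto
  qed
  also have "\<dots> = (\<Sum>c\<in>UNIV. p $ c * \<Delta>$c) + \<delta>\<^sup>2"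
    using ps by (simp add: algebra_simps sum.distrib sum_distrib_right[symmetric])
  finally have lm: "ln m \<le> (\<Sum>c\<in>UNIV. p $ c * \<Delta>$c) + \<delta>\<^sup>2" .
  have "(\<Sum>b\<in>UNIV. ln (softmax (\<theta>+\<Delta>) $ b)) = (\<Sum>b\<in>UNIV. ln (p$b)) + (\<Sum>b\<in>UNIV. \<Delta>$b) - real CARD('k) * ln m"
    unfolding l by (simp add: sum.distrib sum_subtractf)
  moreover have "(\<Sum>b\<in>UNIV. (1 - real CARD('k) * p $ b) * \<Delta>$b) = (\<Sum>b\<in>UNIV. \<Delta>$b) - real CARD('k) * (\<Sum>c\<in>UNIV. p $ c * \<Delta>$c)"
    by (simp add: algebra_simps sum_subtractf sum_distrib_left)
  moreover have "real CARD('k) * ln m \<le> real CARD('k) * ((\<Sum>c\<in>UNIV. p $ c * \<Delta>$c) + \<delta>\<^sup>2)"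
    using lm by (intro mult_left_mono) auto
  ultimately show ?thesis unfolding p_def by (simp add: algebra_simps)
qed

lemma P_part:
  fixes \<theta> \<Delta> r :: "real^'k::finite"
  assumes D: "\<And>b. \<bar>\<Delta>$b\<bar> \<le> \<delta>" and d1: "\<delta> \<le> 1/2" and R: "\<And>b. \<bar>r$b\<bar> \<le> Rm"
  shows "rbar r (\<theta>+\<Delta>) \<ge> rbar r \<theta> + (\<Sum>b\<in>UNIV. softmax \<theta> $ b * (r$b - rbar r \<theta>) * \<Delta>$b) - 10 * Rm * \<delta>\<^sup>2"
proof -
  define p where "p = softmax \<theta>"
  define m where "m = (\<Sum>c\<in>UNIV. p $ c * exp (\<Delta>$c))"
  define rb where "rb = rbar r \<theta>"
  define u where "u b = r$b - rb" for b
  define \<rho> where "\<rho> b = exp (\<Delta>$b) - 1 - \<Delta>$b" for b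
  have pp: "p$b > 0" for b unfolding p_def by (rule softmax_pos)
  have ps: "(\<Sum>b\<in>UNIV. p$b) = 1" unfolding p_def by (rule softmax_sum)
  have mpos: "m > 0" unfolding m_def by (rule sum_pos) (auto intro: pp mult_pos_pos)
  have d0: "\<delta> \<ge> 0" using D[of undefined] by linarith
  have Rm0: "Rm \<ge> 0" using R[of undefined] by linarith
  have rb_def': "rb = (\<Sum>b\<in>UNIV. p$b * r$b)" unfolding rb_def rbar_def p_def ..
  have rbR: "\<bar>rb\<bar> \<le> Rm" unfolding rb_def' by (rule wavg_abs) (use pp ps R in \<open>auto intro: less_imp_le\<close>)
  have uR: "\<bar>u b\<bar> \<le> 2*Rm" for b unfolding u_def using R[of b] rbR by linarith
  have \<rho>0: "\<rho> b \<ge> 0" for b unfolding \<rho>_def using exp_ge_add_one_self[of "\<Delta>$b"] by linarith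
  have \<rho>1: "\<rho> b \<le> \<delta>\<^sup>2" for b
  proof -
    have "\<bar>\<Delta>$b\<bar> \<le> 1" using D[of b] d1 by linarith
    hence "\<rho> b \<le> (\<Delta>$b)\<^sup>2" unfolding \<rho>_def using exp_quad_bound by force
    moreover have "(\<Delta>$b)\<^sup>2 \<le> \<delta>\<^sup>2" using D[of b] by (metis abs_ge_zero order_trans power2_abs power_mono)
    ultimately show ?thesis by linarith
  qed
  define Y where "Y = (\<Sum>b\<in>UNIV. p$b * (\<Delta>$b * u b))"
  define W where "W = (\<Sum>b\<in>UNIV. p$b * (\<rho> b * u b))"
  define d where "d = (\<Sum>b\<in>UNIV. p$b * (\<Delta>$b + \<rho> b))"
  have Y: "\<bar>Y\<bar> \<le> \<delta> * (2*Rm)" unfolding Y_def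
    by (rule wavg_abs) (use pp ps D uR d0 in \<open>auto intro: less_imp_le simp: abs_mult intro!: mult_mono\<close>)
  have W: "\<bar>W\<bar> \<le> \<delta>\<^sup>2 * (2*Rm)" unfolding W_def
    by (rule wavg_abs) (use pp ps \<rho>0 \<rho>1 uR d0 in \<open>auto intro: less_imp_le simp: abs_mult intro!: mult_mono\<close>)
  have dd: "\<bar>d\<bar> \<le> \<delta> + \<delta>\<^sup>2" unfolding d_def
  proof (rule wavg_abs)
    fix b :: 'k show "\<bar>\<Delta>$b + \<rho> b\<bar> \<le> \<delta> + \<delta>\<^sup>2" using D[of b] \<rho>0[of b] \<rho>1[of b] by linarith
  qed (use pp ps in \<open>auto intro: less_imp_le\<close>)
  have md: "m = 1 + d" unfolding m_def d_def \<rho>_def using ps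
    by (simp add: algebra_simps sum_subtractf)
  have "(\<Sum>b\<in>UNIV. p$b * u b) = 0" unfolding u_def using ps
    by (simp add: algebra_simps sum_subtractf rb_def' sum_distrib_right[symmetric])
  hence X: "(\<Sum>b\<in>UNIV. p$b * exp (\<Delta>$b) * u b) = Y + W"
    unfolding Y_def W_def \<rho>_def by (simp add: algebra_simps sum.distrib sum_subtractf)
  have new: "rbar r (\<theta>+\<Delta>) = (\<Sum>b\<in>UNIV. p$b * exp (\<Delta>$b) * r$b) / m"
    unfolding rbar_def softmax_shift p_def[symmetric] m_def[symmetric] by (simp add: sum_divide_distrib)
  have "(\<Sum>b\<in>UNIV. p$b * exp (\<Delta>$b) * r$b) = (\<Sum>b\<in>UNIV. p$b * exp (\<Delta>$b) * u b) + m * rb"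
    unfolding u_def m_def by (simp add: algebra_simps sum_subtractf sum_distrib_left)
  hence new2: "rbar r (\<theta>+\<Delta>) - rb = (Y + W) / m" using new mpos X by (simp add: field_simps)
  have grad: "(\<Sum>b\<in>UNIV. softmax \<theta> $ b * (r$b - rbar r \<theta>) * \<Delta>$b) = Y"
    unfolding Y_def u_def p_def rb_def by (simp add: algebra_simps)
  have dl1: "\<bar>\<Sum>b\<in>UNIV. p$b * \<Delta>$b\<bar> \<le> \<delta>"
    by (rule wavg_abs) (use pp ps D in \<open>auto intro: less_imp_le\<close>)
  have dl2: "(\<Sum>b\<in>UNIV. p$b * \<rho> b) \<ge> 0"
    by (intro sum_nonneg mult_nonneg_nonneg less_imp_le[OF pp] \<rho>0)
  have "d = (\<Sum>b\<in>UNIV. p$b * \<Delta>$b) + (\<Sum>b\<in>UNIV. p$b * \<rho> b)"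
    unfolding d_def by (simp add: distrib_left sum.distrib)
  hence m2: "m \<ge> 1/2" using md dl1 dl2 d1 by linarith
  have "(Y + W)/m - Y = (W - d*Y)/m" using mpos md by (simp add: field_simps)
  moreover have "\<bar>W - d*Y\<bar> \<le> \<delta>\<^sup>2 * (2*Rm) + (\<delta> + \<delta>\<^sup>2) * (\<delta> * (2*Rm))"
  proof -
    have "\<bar>d*Y\<bar> \<le> (\<delta> + \<delta>\<^sup>2) * (\<delta> * (2*Rm))" unfolding abs_mult
      using dd Y by (intro mult_mono) auto
    thus ?thesis using W by linarith
  qed
  moreover have "\<delta>\<^sup>2 * (2*Rm) + (\<delta> + \<delta>\<^sup>2) * (\<delta> * (2*Rm)) \<le> 5 * Rm * \<delta>\<^sup>2"
  proof -
    have "\<delta>\<^sup>2 * \<delta> \<le> \<delta>\<^sup>2 * (1/2)" using d1 d0 by (intro mult_left_mono) auto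
    hence "(\<delta>\<^sup>2 * \<delta>) * Rm \<le> (\<delta>\<^sup>2 * (1/2)) * Rm" using Rm0 by (intro mult_right_mono) auto
    thus ?thesis by (simp add: algebra_simps power2_eq_square)
  qed
  ultimately have E: "\<bar>(Y + W)/m - Y\<bar> \<le> 5 * Rm * \<delta>\<^sup>2 / m"
    apply - 
  proof -
    assume a: "(Y + W)/m - Y = (W - d*Y)/m" "\<bar>W - d*Y\<bar> \<le> \<delta>\<^sup>2 * (2*Rm) + (\<delta> + \<delta>\<^sup>2) * (\<delta> * (2*Rm))"
      "\<delta>\<^sup>2 * (2*Rm) + (\<delta> + \<delta>\<^sup>2) * (\<delta> * (2*Rm)) \<le> 5 * Rm * \<delta>\<^sup>2"
    have "\<bar>W - d*Y\<bar> / m \<le> 5 * Rm * \<delta>\<^sup>2 / m" apply (rule divide_right_mono) using a(2,3) mpos by linarith+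
    thus ?thesis using a(1) mpos by (simp add: abs_divide)
  qed
  have "5 * Rm * \<delta>\<^sup>2 / m \<le> 5 * Rm * \<delta>\<^sup>2 / (1/2)"
    by (rule divide_left_mono) (use m2 Rm0 in auto)
  hence "\<bar>(Y + W)/m - Y\<bar> \<le> 10 * Rm * \<delta>\<^sup>2" using E by simp
  thus ?thesis using new2 grad unfolding rb_def by simp
qed

lemma descent:
  fixes \<theta> \<Delta> r :: "real^'k::finite"
  assumes D: "\<And>b. \<bar>\<Delta>$b\<bar> \<le> \<delta>" and d1: "\<delta> \<le> 1/2" and R: "\<And>b. \<bar>r$b\<bar> \<le> Rm" and eta: "\<eta> > 0"
  shows "Jf \<eta> r (\<theta>+\<Delta>) \<ge> Jf \<eta> r \<theta> + (\<Sum>b\<in>UNIV. grd \<eta> r \<theta> b * \<Delta>$b) - (10 * Rm + real CARD('k) / \<eta>) * \<delta>\<^sup>2"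
proof -
  have P: "rbar r (\<theta>+\<Delta>) \<ge> rbar r \<theta> + (\<Sum>b\<in>UNIV. softmax \<theta> $ b * (r$b - rbar r \<theta>) * \<Delta>$b) - 10 * Rm * \<delta>\<^sup>2"
    by (rule P_part[OF D d1 R])
  have B: "(\<Sum>b\<in>UNIV. ln (softmax (\<theta>+\<Delta>) $ b)) \<ge> (\<Sum>b\<in>UNIV. ln (softmax \<theta> $ b))
           + (\<Sum>b\<in>UNIV. (1 - real CARD('k) * softmax \<theta> $ b) * \<Delta>$b) - real CARD('k) * \<delta>\<^sup>2"
    by (rule B_part[OF D]) (use d1 in auto)
  have B': "(1/\<eta>) * (\<Sum>b\<in>UNIV. ln (softmax (\<theta>+\<Delta>) $ b)) \<ge> (1/\<eta>) * ((\<Sum>b\<in>UNIV. ln (softmax \<theta> $ b))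
           + (\<Sum>b\<in>UNIV. (1 - real CARD('k) * softmax \<theta> $ b) * \<Delta>$b) - real CARD('k) * \<delta>\<^sup>2)"
    using B eta by (intro mult_left_mono) auto
  have G: "(\<Sum>b\<in>UNIV. grd \<eta> r \<theta> b * \<Delta>$b) = (\<Sum>b\<in>UNIV. softmax \<theta> $ b * (r$b - rbar r \<theta>) * \<Delta>$b)
     + (1/\<eta>) * (\<Sum>b\<in>UNIV. (1 - real CARD('k) * softmax \<theta> $ b) * \<Delta>$b)"
  proof -
    have "(\<Sum>b\<in>UNIV. grd \<eta> r \<theta> b * \<Delta>$b) = (\<Sum>b\<in>UNIV. softmax \<theta> $ b * (r$b - rbar r \<theta>) * \<Delta>$b
       + (1/\<eta>) * ((1 - real CARD('k) * softmax \<theta> $ b) * \<Delta>$b))"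
      by (rule sum.cong) (simp_all add: grd_def algebra_simps)
    also have "\<dots> = (\<Sum>b\<in>UNIV. softmax \<theta> $ b * (r$b - rbar r \<theta>) * \<Delta>$b)
     + (1/\<eta>) * (\<Sum>b\<in>UNIV. (1 - real CARD('k) * softmax \<theta> $ b) * \<Delta>$b)"
      by (simp add: sum.distrib sum_distrib_left)
    finally show ?thesis .
  qed
  show ?thesis using P B' unfolding Jf_def G by (simp add: algebra_simps)
qed

definition gv :: "real \<Rightarrow> real^'k::finite \<Rightarrow> 'k \<Rightarrow> real \<Rightarrow> 'k \<Rightarrow> real" where
  "gv \<eta> \<theta> a x b = x * ((if b = a then 1 else 0) - softmax \<theta> $ b) + (1/\<eta>) * (1 - real CARD('k) * softmax \<theta> $ b)"

lemma step_eq: "lbsgb_step \<alpha> \<eta> \<theta> a x = \<theta> + \<alpha> *\<^sub>R (\<chi> b. gv \<eta> \<theta> a x b)"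
proof -
  have pa: "softmax \<theta> $ a \<noteq> 0" using softmax_pos[of \<theta> a] by simp
  have s: "(\<Sum>b\<in>UNIV. softmax \<theta> $ b * rhat \<theta> a x $ b) = x"
  proof -
    have "(\<Sum>b\<in>UNIV. softmax \<theta> $ b * rhat \<theta> a x $ b) = (\<Sum>b\<in>UNIV. if b = a then x else 0)"
      by (rule sum.cong) (use pa in \<open>auto simp: rhat_def\<close>)
    thus ?thesis by simp
  qed
  show ?thesis unfolding lbsgb_step_def Let_def s
    by (simp add: vec_eq_iff gv_def rhat_def pa algebra_simps)
qed

lemma regret_dom:
  fixes \<theta> r :: "real^'k::finite"
  assumes opt: "\<And>b. r$b \<le> r$as" and R: "\<And>b. \<bar>r$b\<bar> \<le> Rm" and eta: "\<eta> > 0"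
  shows "r$as - rbar r \<theta> \<le> 2 * real CARD('k) / \<eta> + (real CARD('k) * \<eta> + 8 * Rm * \<eta>\<^sup>2) * (grd \<eta> r \<theta> as)\<^sup>2"
proof -
  define K where "K = real CARD('k)"
  define q where "q = softmax \<theta> $ as"
  define s where "s = r$as - rbar r \<theta>"
  define g where "g = grd \<eta> r \<theta> as"
  have K1: "K \<ge> 1" unfolding K_def by simp
  have q0: "q > 0" unfolding q_def by (rule softmax_pos)
  have gdef: "g = q * s + (1/\<eta>) * (1 - K*q)" unfolding g_def grd_def q_def s_def K_def by simp
  have rb: "\<bar>rbar r \<theta>\<bar> \<le> Rm" unfolding rbar_def
    by (rule wavg_abs) (use softmax_pos softmax_sum R in \<open>auto intro: less_imp_le\<close>)
  have "rbar r \<theta> \<le> (\<Sum>b\<in>UNIV. softmax \<theta> $ b * r$as)" unfolding rbar_def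
    by (rule sum_mono) (use softmax_pos opt in \<open>auto intro: mult_left_mono less_imp_le\<close>)
  also have "\<dots> = r$as" using softmax_sum[of \<theta>] by (simp add: sum_distrib_right[symmetric])
  finally have s0: "s \<ge> 0" unfolding s_def by simp
  have s2: "s \<le> 2*Rm" unfolding s_def using R[of as] rb by linarith
  have Rm0: "Rm \<ge> 0" using R[of as] by linarith
  have sq: "0 \<le> (\<eta> * \<bar>g\<bar> - 1)\<^sup>2" by simp
  have main: "s \<le> 2 * K / \<eta> + (K * \<eta> + 8 * Rm * \<eta>\<^sup>2) * g\<^sup>2"
  proof (cases "q \<ge> 1/(2*K)")
    case True
    have e1: "q * s = g - (1/\<eta>)*(1 - K*q)" using gdef by simp
    have e2: "(1/\<eta>)*(1-K*q) = 1/\<eta> - K*q/\<eta>" by (simp add: algebra_simps)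
    have e3: "1/\<eta> > 0" using eta by simp
    have "q * s \<le> \<bar>g\<bar> + K*q/\<eta>" using e1 e2 e3 abs_ge_self[of g] by linarith
    hence "s \<le> \<bar>g\<bar>/q + K/\<eta>" using q0 by (simp add: field_simps)
    moreover have "\<bar>g\<bar>/q \<le> \<bar>g\<bar> / (1/(2*K))" using True q0 K1 by (intro divide_left_mono) auto
    moreover have "2*K*\<bar>g\<bar> \<le> K/\<eta> + K*\<eta>*g\<^sup>2"
    proof -
      have "\<eta> * (2*\<bar>g\<bar>) \<le> \<eta> * (1/\<eta> + \<eta>*g\<^sup>2)" using sq eta
        by (simp add: power2_eq_square algebra_simps)
      hence "2*\<bar>g\<bar> \<le> 1/\<eta> + \<eta>*g\<^sup>2" using eta by simp
      hence "K*(2*\<bar>g\<bar>) \<le> K*(1/\<eta> + \<eta>*g\<^sup>2)" using K1 by (intro mult_left_mono) auto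
      thus ?thesis by (simp add: algebra_simps)
    qed
    moreover have "0 \<le> 8 * Rm * \<eta>\<^sup>2 * g\<^sup>2" using Rm0 by simp
    moreover have "\<bar>g\<bar> / (1/(2*K)) = 2*K*\<bar>g\<bar>" by simp
    moreover have "(K * \<eta> + 8 * Rm * \<eta>\<^sup>2) * g\<^sup>2 = K*\<eta>*g\<^sup>2 + 8 * Rm * \<eta>\<^sup>2 * g\<^sup>2" by (simp add: algebra_simps)
    moreover have "2*K/\<eta> = K/\<eta> + K/\<eta>" by simp
    ultimately show ?thesis by linarith
  next
    case False
    hence "K*q \<le> 1/2" using K1 q0 by (simp add: field_simps)
    hence "(1/\<eta>) * (1/2) \<le> (1/\<eta>) * (1 - K*q)" using eta by (intro mult_left_mono) auto
    moreover have "q * s \<ge> 0" using q0 s0 by simp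
    ultimately have "g \<ge> 1/(2*\<eta>)" using gdef by simp
    hence "\<eta> * g \<ge> 1/2" using eta by (simp add: field_simps)
    hence "(\<eta>*g)\<^sup>2 \<ge> (1/2)\<^sup>2" by (intro power_mono) auto
    hence "4*(\<eta>\<^sup>2*g\<^sup>2) \<ge> 1" by (simp add: power_mult_distrib power2_eq_square mult_ac)
    hence "2*Rm*1 \<le> 2*Rm*(4*(\<eta>\<^sup>2*g\<^sup>2))" using Rm0 by (intro mult_left_mono) auto
    moreover have "0 \<le> 2 * K / \<eta>" "0 \<le> K * \<eta> * g\<^sup>2" using eta K1 by auto
    ultimately show ?thesis using s2 by (simp add: algebra_simps)
  qed
  thus ?thesis unfolding s_def g_def K_def .
qed

lemma softmax_le1: "softmax (\<theta>::real^'k::finite) $ a \<le> 1"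
proof -
  have "softmax \<theta> $ a \<le> (\<Sum>b\<in>UNIV. softmax \<theta> $ b)"
    by (rule member_le_sum) (auto intro: less_imp_le softmax_pos)
  thus ?thesis using softmax_sum[of \<theta>] by simp
qed

lemma Jf_le:
  fixes \<theta> r :: "real^'k::finite"
  assumes R: "\<And>b. \<bar>r$b\<bar> \<le> Rm" and eta: "\<eta> > 0"
  shows "Jf \<eta> r \<theta> \<le> Rm"
proof -
  have rb: "\<bar>rbar r \<theta>\<bar> \<le> Rm" unfolding rbar_def
    by (rule wavg_abs) (use softmax_pos softmax_sum R in \<open>auto intro: less_imp_le\<close>)
  have "(\<Sum>b\<in>UNIV. ln (softmax \<theta> $ b)) \<le> 0"
    by (intro sum_nonpos) (metis ln_le_zero_iff softmax_pos softmax_le1)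
  hence "(1/\<eta>) * (\<Sum>b\<in>UNIV. ln (softmax \<theta> $ b)) \<le> 0" using eta by (simp add: divide_nonpos_pos)
  thus ?thesis unfolding Jf_def using rb by linarith
qed

lemma gv_bound:
  assumes "\<bar>x\<bar> \<le> Rm" "\<eta> > 0"
  shows "\<bar>gv \<eta> (\<theta>::real^'k::finite) a x b\<bar> \<le> Rm + real CARD('k) / \<eta>"
proof -
  define p where "p = softmax \<theta> $ b"
  have p: "0 < p" "p \<le> 1" unfolding p_def by (auto intro: softmax_pos softmax_le1)
  have K1: "real CARD('k) \<ge> 1" by simp
  have "\<bar>(if b = a then 1 else 0) - p\<bar> \<le> 1" using p by auto
  hence "\<bar>x\<bar> * \<bar>(if b = a then 1 else 0) - p\<bar> \<le> Rm * 1" using assms(1)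
    by (intro mult_mono) auto
  hence a1: "\<bar>x * ((if b = a then 1 else 0) - p)\<bar> \<le> Rm" by (simp add: abs_mult)
  have "\<bar>1 - real CARD('k) * p\<bar> \<le> real CARD('k)"
  proof -
    have "real CARD('k) * p \<le> real CARD('k)" using p K1 by (simp add: mult_left_le)
    moreover have "real CARD('k) * p \<ge> 0" using p by simp
    ultimately show ?thesis using K1 by linarith
  qed
  hence a2: "\<bar>(1/\<eta>) * (1 - real CARD('k) * p)\<bar> \<le> real CARD('k) / \<eta>" using assms(2)
    by (simp add: abs_mult divide_right_mono)
  show ?thesis unfolding gv_def p_def[symmetric] using a1 a2 by linarith
qed

lemma gv_avg:
  fixes \<theta> r :: "real^'k::finite"
  shows "(\<Sum>a\<in>UNIV. softmax \<theta> $ a * gv \<eta> \<theta> a (r$a) b) = grd \<eta> r \<theta> b"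
proof -
  define p where "p = softmax \<theta>"
  have ps: "(\<Sum>a\<in>UNIV. p$a) = 1" unfolding p_def by (rule softmax_sum)
  have "(\<Sum>a\<in>UNIV. p $ a * gv \<eta> \<theta> a (r$a) b) =
      (\<Sum>a\<in>UNIV. (if a = b then p$a * r$a else 0) - p$b * (p$a * r$a) + ((1/\<eta>) * (1 - real CARD('k) * p $ b)) * p$a)"
    by (rule sum.cong) (auto simp: gv_def p_def algebra_simps)
  also have "\<dots> = p$b * r$b - p$b * (\<Sum>a\<in>UNIV. p$a * r$a)
      + (1/\<eta>) * (1 - real CARD('k) * p $ b) * (\<Sum>a\<in>UNIV. p$a)"
    by (simp add: sum.distrib sum_subtractf sum_distrib_left)
  also have "\<dots> = grd \<eta> r \<theta> b" unfolding grd_def rbar_def p_def[symmetric] ps by (simp add: algebra_simps)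
  finally show ?thesis unfolding p_def .
qed

lemma gv_lin:
  "(\<Sum>b\<in>UNIV. grd \<eta> r \<theta> b * gv \<eta> (\<theta>::real^'k::finite) a x b) =
     x * (\<Sum>b\<in>UNIV. grd \<eta> r \<theta> b * ((if b = a then 1 else 0) - softmax \<theta> $ b))
     + (\<Sum>b\<in>UNIV. grd \<eta> r \<theta> b * ((1/\<eta>) * (1 - real CARD('k) * softmax \<theta> $ b)))"
proof -
  have "(\<Sum>b\<in>UNIV. grd \<eta> r \<theta> b * gv \<eta> (\<theta>::real^'k::finite) a x b) =
    (\<Sum>b\<in>UNIV. x * (grd \<eta> r \<theta> b * ((if b = a then 1 else 0) - softmax \<theta> $ b))
     + grd \<eta> r \<theta> b * ((1/\<eta>) * (1 - real CARD('k) * softmax \<theta> $ b)))"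
    by (rule sum.cong) (auto simp: gv_def algebra_simps)
  thus ?thesis by (simp add: sum.distrib sum_distrib_left)
qed

lemma inst_regret_eq:
  fixes r \<theta> :: "real^'k::finite"
  assumes "opt_arm r = as"
  shows "inst_regret r \<theta> = r$as - rbar r \<theta>"
proof -
  have "inst_regret r \<theta> = (\<Sum>i\<in>UNIV. (if i = as then r$i else 0) - softmax \<theta> $ i * r$i)"
    unfolding inst_regret_def pi_star_def assms inner_vec_def
    by (rule sum.cong) (auto simp: algebra_simps)
  thus ?thesis by (simp add: sum_subtractf rbar_def)
qed

lemma D_facts:
  fixes D :: "(real^'k::finite) measure"
  assumes P: "prob_space D" and sD: "sets D = sets borel" and AE: "AE R in D. \<forall>a. \<bar>R$a\<bar> \<le> Rm"
  shows "integrable D (\<lambda>R. R$a)" "integral\<^sup>L D (\<lambda>R. R$a) = mean_reward D $ a"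
    "\<bar>mean_reward D $ a\<bar> \<le> Rm"
proof -
  interpret prob_space D by fact
  have meas: "(\<lambda>R. R) \<in> borel_measurable D" using measurable_ident_sets[OF sD] .
  have "AE R in D. norm R \<le> real CARD('k) * Rm"
    using AE
  proof eventually_elim
    case (elim R)
    have "norm R \<le> (\<Sum>i\<in>UNIV. \<bar>R$i\<bar>)" by (rule norm_le_l1_cart)
    also have "\<dots> \<le> (\<Sum>i::'k\<in>UNIV. Rm)" using elim by (intro sum_mono) auto
    finally show ?case by simp
  qed
  hence int: "integrable D (\<lambda>R. R)" using meas by (intro integrable_const_bound) auto
  show i1: "integrable D (\<lambda>R. R$a)" using integrable_bounded_linear[OF bounded_linear_vec_nth int] .
  show i2: "integral\<^sup>L D (\<lambda>R. R$a) = mean_reward D $ a"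
    unfolding mean_reward_def using integral_bounded_linear[OF bounded_linear_vec_nth int] .
  have ae1: "AE R in D. R$a \<le> Rm" using AE by eventually_elim (auto simp: abs_le_iff)
  have ae2: "AE R in D. - Rm \<le> R$a" using AE by eventually_elim (metis abs_le_iff minus_le_iff)
  have "integral\<^sup>L D (\<lambda>R. R$a) \<le> integral\<^sup>L D (\<lambda>R. Rm)"
    by (rule integral_mono_AE[OF i1 integrable_const ae1])
  moreover have "integral\<^sup>L D (\<lambda>R. - Rm) \<le> integral\<^sup>L D (\<lambda>R. R$a)"
    by (rule integral_mono_AE[OF integrable_const i1 ae2])
  ultimately show "\<bar>mean_reward D $ a\<bar> \<le> Rm" using i2 prob_space by simp
qed

lemma regret_induct:
  fixes D :: "(real^'k::finite) measure" and \<theta> :: "real^'k"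
  assumes P: "prob_space D" and sD: "sets D = sets borel" and AE: "AE R in D. \<forall>a. \<bar>R$a\<bar> \<le> Rm"
    and opt1: "opt_arm (mean_reward D) = as" and opt2: "\<And>b. mean_reward D $ b \<le> mean_reward D $ as"
    and alpha: "\<alpha> > 0" and eta: "\<eta> > 0"
    and G: "G = Rm + real CARD('k) / \<eta>" and aG: "\<alpha> * G \<le> 1/2"
    and L: "L = 10 * Rm + real CARD('k) / \<eta>"
    and bb: "bb = (real CARD('k) * \<eta> + 8 * Rm * \<eta>\<^sup>2) / \<alpha>"
    and c0: "c0 = 2 * real CARD('k) / \<eta> + bb * L * \<alpha>\<^sup>2 * G\<^sup>2"
  shows "exp_regret D \<alpha> \<eta> n \<theta> \<le> real n * c0 + bb * (Rm - Jf \<eta> (mean_reward D) \<theta>)"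
proof (induction n arbitrary: \<theta>)
  define r where "r = mean_reward D"
  have R: "\<bar>r$b\<bar> \<le> Rm" for b unfolding r_def by (rule D_facts(3)[OF P sD AE])
  have Rm0: "Rm \<ge> 0" using R[of as] by linarith
  have bb0: "bb \<ge> 0" unfolding bb using alpha eta Rm0 by simp
  have L0: "L \<ge> 0" unfolding L using Rm0 eta by simp
  have c00: "c0 \<ge> 0" unfolding c0 using bb0 L0 eta by simp
  have Jle: "Jf \<eta> r \<theta>' \<le> Rm" for \<theta>' by (rule Jf_le[OF R eta])
  {
    case 0
    show ?case using Jle[of \<theta>] bb0 unfolding r_def by simp
  next
    case (Suc n)
    note IH = Suc[folded r_def]
    define S1 where "S1 a = (\<Sum>b\<in>UNIV. grd \<eta> r \<theta> b * ((if b = a then 1 else 0) - softmax \<theta> $ b))" for a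
    define S2 where "S2 = (\<Sum>b\<in>UNIV. grd \<eta> r \<theta> b * ((1/\<eta>) * (1 - real CARD('k) * softmax \<theta> $ b)))"
    define C1 where "C1 = real n * c0 + bb * (Rm - Jf \<eta> r \<theta> + L * \<alpha>\<^sup>2 * G\<^sup>2) - bb * \<alpha> * S2"
    define h where "h a R = C1 - bb * \<alpha> * S1 a * R$a" for a and R :: "real^'k"
    define f where "f a R = exp_regret D \<alpha> \<eta> n (lbsgb_step \<alpha> \<eta> \<theta> a (R$a))" for a and R :: "real^'k"
    have key: "f a R \<le> h a R \<and> 0 \<le> h a R" if RR: "\<forall>c. \<bar>R$c\<bar> \<le> Rm" for a R
    proof -
      define x where "x = R$a"
      define \<Delta> where "\<Delta> = \<alpha> *\<^sub>R (\<chi> b. gv \<eta> \<theta> a x b)"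
      have st: "lbsgb_step \<alpha> \<eta> \<theta> a (R$a) = \<theta> + \<Delta>" unfolding \<Delta>_def x_def by (rule step_eq)
      have Db: "\<bar>\<Delta>$b\<bar> \<le> \<alpha> * G" for b
      proof -
        have "\<bar>gv \<eta> \<theta> a x b\<bar> \<le> G" unfolding G x_def by (rule gv_bound) (use RR eta in auto)
        thus ?thesis unfolding \<Delta>_def using alpha by (simp add: abs_mult mult_left_mono)
      qed
      have desc: "Jf \<eta> r (\<theta>+\<Delta>) \<ge> Jf \<eta> r \<theta> + (\<Sum>b\<in>UNIV. grd \<eta> r \<theta> b * \<Delta>$b) - L * (\<alpha> * G)\<^sup>2"
        unfolding L by (rule descent[OF Db aG R eta])
      have "(\<Sum>b\<in>UNIV. grd \<eta> r \<theta> b * \<Delta>$b) = \<alpha> * (\<Sum>b\<in>UNIV. grd \<eta> r \<theta> b * gv \<eta> \<theta> a x b)"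
        unfolding \<Delta>_def by (simp add: sum_distrib_left algebra_simps)
      also have "\<dots> = \<alpha> * (x * S1 a + S2)" unfolding gv_lin S1_def S2_def ..
      finally have "Jf \<eta> r (\<theta>+\<Delta>) \<ge> Jf \<eta> r \<theta> + \<alpha> * (x * S1 a + S2) - L * \<alpha>\<^sup>2 * G\<^sup>2"
        using desc by (simp add: power_mult_distrib)
      hence "bb * (Rm - Jf \<eta> r (\<theta>+\<Delta>)) \<le> bb * (Rm - (Jf \<eta> r \<theta> + \<alpha> * (x * S1 a + S2) - L * \<alpha>\<^sup>2 * G\<^sup>2))"
        using bb0 by (intro mult_left_mono) auto
      also have "bb * (Rm - (Jf \<eta> r \<theta> + \<alpha> * (x * S1 a + S2) - L * \<alpha>\<^sup>2 * G\<^sup>2)) = h a R - real n * c0"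
        unfolding h_def C1_def x_def by (simp add: algebra_simps)
      finally have hb: "real n * c0 + bb * (Rm - Jf \<eta> r (\<theta>+\<Delta>)) \<le> h a R" by simp
      have "f a R \<le> real n * c0 + bb * (Rm - Jf \<eta> r (\<theta>+\<Delta>))" unfolding f_def st using IH .
      moreover have "0 \<le> real n * c0 + bb * (Rm - Jf \<eta> r (\<theta>+\<Delta>))"
        using Jle[of "\<theta>+\<Delta>"] bb0 c00 by simp
      ultimately show ?thesis using hb by linarith
    qed
    have int_a: "integrable D (\<lambda>R. R$a)" and int_eq: "integral\<^sup>L D (\<lambda>R. R$a) = r$a" for a
      unfolding r_def by (rule D_facts[OF P sD AE])+
    interpret prob_space D by fact
    have hint: "integrable D (h a)" for a unfolding h_def using int_a[of a] by auto
    have hval: "integral\<^sup>L D (h a) = C1 - bb * \<alpha> * S1 a * r$a" for a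
      unfolding h_def using int_a[of a] int_eq[of a] prob_space by simp
    have fh: "integral\<^sup>L D (f a) \<le> integral\<^sup>L D (h a)" for a
    proof (cases "integrable D (f a)")
      case True
      show ?thesis by (rule integral_mono_AE[OF True hint]) (use AE key in \<open>auto elim!: AE_mp\<close>)
    next
      case False
      hence "integral\<^sup>L D (f a) = 0" by (rule not_integrable_integral_eq)
      moreover have "0 \<le> integral\<^sup>L D (h a)"
        by (rule integral_nonneg_AE) (use AE key in \<open>auto elim!: AE_mp\<close>)
      ultimately show ?thesis by simp
    qed
    define p where "p = softmax \<theta>"
    have pp: "p$a > 0" for a unfolding p_def by (rule softmax_pos)
    have ps: "(\<Sum>a\<in>UNIV. p$a) = 1" unfolding p_def by (rule softmax_sum)
    have "(\<Sum>a\<in>UNIV. p$a * integral\<^sup>L D (f a)) \<le> (\<Sum>a\<in>UNIV. p$a * (C1 - bb * \<alpha> * S1 a * r$a))"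
      by (rule sum_mono) (use fh hval pp in \<open>auto intro!: mult_left_mono less_imp_le\<close>)
    also have "\<dots> = C1 - bb * \<alpha> * (\<Sum>a\<in>UNIV. p$a * (r$a * S1 a))"
      using ps sum_distrib_left[of C1 "\<lambda>a. p$a" UNIV, symmetric] by (simp add: algebra_simps sum_subtractf sum_distrib_left sum_distrib_right[symmetric])
    finally have I1: "(\<Sum>a\<in>UNIV. p$a * integral\<^sup>L D (f a)) \<le> C1 - bb * \<alpha> * (\<Sum>a\<in>UNIV. p$a * (r$a * S1 a))" .
    have "(\<Sum>a\<in>UNIV. p$a * (r$a * S1 a)) + S2 = (\<Sum>a\<in>UNIV. p$a * (r$a * S1 a + S2))"
      using ps sum_distrib_left[of S2 "\<lambda>a. p$a" UNIV, symmetric] by (simp add: algebra_simps sum.distrib sum_distrib_right[symmetric])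
    also have "\<dots> = (\<Sum>a\<in>UNIV. p$a * (\<Sum>b\<in>UNIV. grd \<eta> r \<theta> b * gv \<eta> \<theta> a (r$a) b))"
      unfolding gv_lin S1_def S2_def ..
    also have "\<dots> = (\<Sum>b\<in>UNIV. grd \<eta> r \<theta> b * (\<Sum>a\<in>UNIV. p$a * gv \<eta> \<theta> a (r$a) b))"
      by (simp add: sum_distrib_left algebra_simps) (rule sum.swap)
    also have "\<dots> = (\<Sum>b\<in>UNIV. (grd \<eta> r \<theta> b)\<^sup>2)"
      unfolding p_def gv_avg by (simp add: power2_eq_square)
    finally have I2: "(\<Sum>a\<in>UNIV. p$a * (r$a * S1 a)) = (\<Sum>b\<in>UNIV. (grd \<eta> r \<theta> b)\<^sup>2) - S2" by simp
    have rd: "r$as - rbar r \<theta> \<le> 2 * real CARD('k) / \<eta> + (real CARD('k) * \<eta> + 8 * Rm * \<eta>\<^sup>2) * (grd \<eta> r \<theta> as)\<^sup>2"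
      by (rule regret_dom) (use opt2 R eta in \<open>auto simp: r_def\<close>)
    have gs: "(grd \<eta> r \<theta> as)\<^sup>2 \<le> (\<Sum>b\<in>UNIV. (grd \<eta> r \<theta> b)\<^sup>2)"
      by (rule member_le_sum) auto
    have M0: "real CARD('k) * \<eta> + 8 * Rm * \<eta>\<^sup>2 \<ge> 0" using eta Rm0 by simp
    have bba: "bb * \<alpha> = real CARD('k) * \<eta> + 8 * Rm * \<eta>\<^sup>2" unfolding bb using alpha by simp
    have "exp_regret D \<alpha> \<eta> (Suc n) \<theta> = (r$as - rbar r \<theta>) + (\<Sum>a\<in>UNIV. p$a * integral\<^sup>L D (f a))"
      unfolding exp_regret.simps r_def[symmetric] p_def f_def inst_regret_eq[OF opt1[folded r_def]] ..
    also have "\<dots> \<le> 2 * real CARD('k) / \<eta> + (bb * \<alpha>) * (\<Sum>b\<in>UNIV. (grd \<eta> r \<theta> b)\<^sup>2)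
        + C1 - bb * \<alpha> * ((\<Sum>b\<in>UNIV. (grd \<eta> r \<theta> b)\<^sup>2) - S2)"
      using rd I1[unfolded I2] mult_left_mono[OF gs M0] unfolding bba by linarith
    also have "\<dots> = real (Suc n) * c0 + bb * (Rm - Jf \<eta> r \<theta>)"
      unfolding C1_def c0 by (simp add: algebra_simps add_divide_distrib)
    finally show ?case unfolding r_def .
  }
qed

lemma pw7: "(x::real) > 0 \<Longrightarrow> (x powr (1/7)) ^ n = x powr (real n / 7)"
  by (simp add: powr_realpow[symmetric] powr_powr)

lemma final_arith:
  fixes t Rm K X ca :: real
  assumes t1: "t \<ge> 1" and Rm: "Rm > 0" and K1: "K \<ge> 1" and ca: "ca > 0"
    and X: "X \<le> Xb"
    and bb: "bb = (K * t + 8 * Rm * t\<^sup>2) / (ca / t^3)"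
    and c0: "c0 = 2 * K / t + bb * (10 * Rm + K / t) * (ca / t^3)\<^sup>2 * (Rm + K / t)\<^sup>2"
  shows "t^7 * c0 + bb * X \<le> (2 * K + (K + 8*Rm) * ca * (10*Rm + K) * (Rm + K)\<^sup>2 + (K + 8*Rm) * max Xb 0 / ca) * t^6"
proof -
  have t0: "t > 0" using t1 by simp
  define M where "M = K * t + 8 * Rm * t\<^sup>2"
  have M0: "M \<ge> 0" unfolding M_def using t0 K1 Rm by simp
  have Mb: "M \<le> (K + 8*Rm) * t\<^sup>2"
  proof -
    have "K * t \<le> K * t\<^sup>2" using t1 K1 by (intro mult_left_mono) (auto simp: power2_eq_square)
    thus ?thesis unfolding M_def by (simp add: algebra_simps)
  qed
  have bbM: "bb * (ca / t^3) = M" unfolding bb M_def using t0 ca by simp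
  have bb0: "bb \<ge> 0" unfolding bb using M0 t0 ca M_def by simp
  have Lb: "10 * Rm + K / t \<le> 10*Rm + K" using t1 K1 by (simp add: divide_le_eq)
  have Gb: "Rm + K / t \<le> Rm + K" using t1 K1 by (simp add: divide_le_eq)
  have G0: "0 \<le> Rm + K / t" "0 \<le> 10 * Rm + K / t" using t0 K1 Rm by auto
  have T1: "t^7 * (2 * K / t) = 2 * K * t^6" using t0 by (simp add: field_simps power_eq_if eval_nat_numeral)
  define L where "L = 10 * Rm + K / t"
  define G where "G = Rm + K / t"
  define c where "c = ca / t^3"
  have c0': "c \<ge> 0" unfolding c_def using ca t0 by simp
  have e1: "t^7 * (bb * L * c\<^sup>2 * G\<^sup>2) = t^7 * (bb * c) * c * L * G\<^sup>2"
    by (simp add: power2_eq_square mult_ac)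
  have s1: "t^7 * M \<le> t^7 * ((K + 8*Rm) * t\<^sup>2)" using Mb t0 by (intro mult_left_mono) auto
  have s2: "t^7 * M * c \<le> t^7 * ((K + 8*Rm) * t\<^sup>2) * c" using s1 c0' by (intro mult_right_mono)
  have s3: "t^7 * M * c * L \<le> t^7 * ((K + 8*Rm) * t\<^sup>2) * c * (10 * Rm + K)"
    apply (rule mult_mono[OF s2])
    using Lb G0 t0 c0' Rm K1 unfolding L_def by auto
  have G2: "G\<^sup>2 \<le> (Rm + K)\<^sup>2" unfolding G_def using Gb G0 by (intro power_mono) auto
  have s4: "t^7 * M * c * L * G\<^sup>2 \<le> t^7 * ((K + 8*Rm) * t\<^sup>2) * c * (10 * Rm + K) * (Rm + K)\<^sup>2"
    apply (rule mult_mono[OF s3 G2])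
    using G0 t0 c0' Rm K1 unfolding L_def by auto
  have e2: "t^7 * ((K + 8*Rm) * t\<^sup>2) * c * (10 * Rm + K) * (Rm + K)\<^sup>2 = (K + 8*Rm) * ca * (10*Rm + K) * (Rm + K)\<^sup>2 * t^6"
    unfolding c_def using t0 by (simp add: field_simps power_eq_if eval_nat_numeral)
  have T2: "t^7 * (bb * L * c\<^sup>2 * G\<^sup>2) \<le> (K + 8*Rm) * ca * (10*Rm + K) * (Rm + K)\<^sup>2 * t^6"
    using s4 unfolding e1 e2[symmetric] bbM[folded c_def] .
  have bbeq: "bb = M * t^3 / ca" unfolding bb M_def using t0 ca by simp
  have "bb * X \<le> bb * max Xb 0" using X bb0 by (intro mult_left_mono) auto
  also have "\<dots> \<le> (K + 8*Rm) * t\<^sup>2 * t^4 / ca * max Xb 0"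
  proof -
    have "t^3 \<le> t^4" using t1 by (intro power_increasing) auto
    hence "M * t^3 \<le> (K + 8*Rm) * t\<^sup>2 * t^4" using Mb M0 t0 by (intro mult_mono) auto
    thus ?thesis unfolding bbeq using ca by (intro mult_right_mono divide_right_mono) auto
  qed
  also have "\<dots> = (K + 8*Rm) * max Xb 0 / ca * t^6" by (simp add: field_simps power_eq_if eval_nat_numeral)
  finally have T3: "bb * X \<le> (K + 8*Rm) * max Xb 0 / ca * t^6" .
  show ?thesis unfolding c0 L_def[symmetric] G_def[symmetric] c_def[symmetric] using T1 T2 T3 by (simp add: algebra_simps)
qed

lemma two_elems:
  assumes "CARD('k::finite) \<ge> 2" shows "\<exists>a b :: 'k. a \<noteq> b"
proof (rule ccontr)
  assume "\<not> ?thesis"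
  hence "UNIV \<subseteq> {undefined :: 'k}" by auto
  hence "CARD('k) \<le> card {undefined :: 'k}" by (intro card_mono) auto
  thus False using assms by simp
qed

lemma gap_facts:
  fixes r :: "real^'k::finite"
  assumes K2: "CARD('k) \<ge> 2" and nt: "\<forall>a b. a \<noteq> b \<longrightarrow> r $ a \<noteq> r $ b" and R: "\<And>b. \<bar>r$b\<bar> \<le> Rm"
  shows "gap r > 0" "gap r \<le> 2 * Rm"
proof -
  define S where "S = {\<bar>r$a - r$b\<bar> | a b. a \<noteq> b}"
  have fin: "finite S"
  proof -
    have "S \<subseteq> (\<lambda>(a,b). \<bar>r$a - r$b\<bar>) ` UNIV" unfolding S_def by auto
    thus ?thesis by (rule finite_subset) auto
  qed
  obtain a0 b0 :: 'k where "a0 \<noteq> b0" using two_elems[OF K2] by blast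
  hence ne: "S \<noteq> {}" unfolding S_def by auto
  have "gap r \<in> S" unfolding gap_def S_def[symmetric] using fin ne by (rule Min_in)
  then obtain a b where ab: "a \<noteq> b" "gap r = \<bar>r$a - r$b\<bar>" unfolding S_def by auto
  show "gap r > 0" using ab nt by auto
  show "gap r \<le> 2 * Rm" using ab R[of a] R[of b] by linarith
qed

theorem corollary5p6:
  fixes Rmax :: real
  assumes K2: "CARD('k::finite) \<ge> 2"
    and Rpos: "Rmax > 0"
  shows "\<exists>C>0. \<forall>D :: (real^'k) measure.
           prob_space D \<longrightarrow> sets D = sets borel \<longrightarrow>
           (AE R in D. \<forall>a. \<bar>R$a\<bar> \<le> Rmax) \<longrightarrow>
           (\<forall>a b. a \<noteq> b \<longrightarrow> mean_reward D $ a \<noteq> mean_reward D $ b) \<longrightarrow>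
           (\<exists>c\<^sub>\<alpha>>0. \<exists>c\<^sub>\<eta>>0. \<forall>T::nat. T \<ge> 1 \<longrightarrow>
              exp_regret D (c\<^sub>\<alpha> * real T powr (-3/7)) (c\<^sub>\<eta> * real T powr (1/7)) T 0
                \<le> C * gap (mean_reward D) powr (-2/7) * real T powr (6/7))"
proof -
  define K where "K = real CARD('k)"
  have K1: "K \<ge> 1" unfolding K_def by simp
  define ca where "ca = 1 / (2 * (Rmax + K))"
  have ca0: "ca > 0" unfolding ca_def using Rpos K1 by simp
  define Xb where "Xb = 2 * Rmax + K * ln K"
  define C0 where "C0 = 2 * K + (K + 8*Rmax) * ca * (10*Rmax + K) * (Rmax + K)\<^sup>2 + (K + 8*Rmax) * max Xb 0 / ca"
  define C where "C = C0 * (2 * Rmax) powr (2/7)"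
  have C00: "C0 > 0" unfolding C0_def using K1 Rpos ca0 by (intro add_pos_nonneg) auto
  have C0: "C > 0" unfolding C_def using C00 Rpos by simp
  show ?thesis
  proof (rule exI[of _ C], intro conjI C0 allI impI)
    fix D :: "(real^'k) measure"
    assume P: "prob_space D" and sD: "sets D = sets borel" and AE: "AE R in D. \<forall>a. \<bar>R$a\<bar> \<le> Rmax"
      and nt: "\<forall>a b. a \<noteq> b \<longrightarrow> mean_reward D $ a \<noteq> mean_reward D $ b"
    define r where "r = mean_reward D"
    have R: "\<bar>r$b\<bar> \<le> Rmax" for b unfolding r_def by (rule D_facts(3)[OF P sD AE])
    obtain as where opt2: "\<And>b. r$b \<le> r$as"
    proof -
      have "Max (range (\<lambda>b. r$b)) \<in> range (\<lambda>b. r$b)" by (rule Max_in) auto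
      then obtain as where "Max (range (\<lambda>b. r$b)) = r$as" by (rule rangeE)
      moreover have "r$b \<le> Max (range (\<lambda>b. r$b))" for b by (rule Max_ge) auto
      ultimately show ?thesis using that by metis
    qed
    have opt1: "opt_arm r = as" unfolding opt_arm_def
    proof (rule the_equality)
      show "\<forall>b. r$b \<le> r$as" using opt2 by blast
    next
      fix a assume "\<forall>b. r$b \<le> r$a"
      hence "r$a = r$as" using opt2[of a] by (metis order_antisym)
      thus "a = as" using nt unfolding r_def by metis
    qed
    have gp: "gap r > 0" "gap r \<le> 2 * Rmax" using gap_facts[OF K2 nt[folded r_def] R] by auto
    show "\<exists>c\<^sub>\<alpha>>0. \<exists>c\<^sub>\<eta>>0. \<forall>T::nat. T \<ge> 1 \<longrightarrow>
              exp_regret D (c\<^sub>\<alpha> * real T powr (-3/7)) (c\<^sub>\<eta> * real T powr (1/7)) T 0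
                \<le> C * gap (mean_reward D) powr (-2/7) * real T powr (6/7)"
    proof (rule exI[of _ ca], intro conjI ca0, rule exI[of _ "1::real"], intro conjI zero_less_one allI impI)
      fix T :: nat assume T1: "T \<ge> 1"
      have Tpos: "real T > 0" using T1 by simp
      define t where "t = real T powr (1/7)"
      have t1: "t \<ge> 1" unfolding t_def using T1 by (intro ge_one_powr_ge_zero) auto
      have t0: "t > 0" using t1 by simp
      have tT: "t^7 = real T" unfolding t_def using pw7[OF Tpos, of 7] Tpos by simp
      have t6: "t^6 = real T powr (6/7)" unfolding t_def using pw7[OF Tpos, of 6] by simp
      have t3a: "real T powr (3/7) = t^3" unfolding t_def using pw7[OF Tpos, of 3] by simp
      have t3b: "real T powr (-3/7) = real T powr (-(3/7))" by simp
      have t3: "real T powr (-3/7) = 1 / t^3"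
        unfolding t3b powr_minus_divide t3a ..
      define \<alpha> where "\<alpha> = ca / t^3"
      have alpha_eq: "ca * real T powr (-3/7) = \<alpha>" unfolding \<alpha>_def t3 by simp
      have eta_eq: "1 * real T powr (1/7) = t" unfolding t_def by simp
      have alpha0: "\<alpha> > 0" unfolding \<alpha>_def using ca0 t0 by simp
      define G where "G = Rmax + K / t"
      define L where "L = 10 * Rmax + K / t"
      define bb where "bb = (K * t + 8 * Rmax * t\<^sup>2) / \<alpha>"
      define c0 where "c0 = 2 * K / t + bb * L * \<alpha>\<^sup>2 * G\<^sup>2"
      have aG: "\<alpha> * G \<le> 1/2"
      proof -
        have "\<alpha> \<le> ca" unfolding \<alpha>_def using ca0 t1 by (simp add: divide_le_eq one_le_power)
        moreover have "G \<le> Rmax + K" unfolding G_def using t1 K1 by (simp add: divide_le_eq)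
        moreover have "G \<ge> 0" unfolding G_def using t0 K1 Rpos by simp
        ultimately have "\<alpha> * G \<le> ca * (Rmax + K)" using alpha0 ca0 by (intro mult_mono) auto
        also have "\<dots> = 1/2" unfolding ca_def using Rpos K1 by simp
        finally show ?thesis .
      qed
      have main: "exp_regret D \<alpha> t T 0 \<le> real T * c0 + bb * (Rmax - Jf t r 0)"
        unfolding r_def
        by (rule regret_induct[OF P sD AE opt1[unfolded r_def] opt2[unfolded r_def] alpha0 t0 _ aG])
           (auto simp: G_def L_def bb_def c0_def K_def)
      have X: "Rmax - Jf t r 0 \<le> Xb"
      proof -
        have rb: "\<bar>rbar r 0\<bar> \<le> Rmax" unfolding rbar_def
          by (rule wavg_abs) (use softmax_pos softmax_sum R in \<open>auto intro: less_imp_le\<close>)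
        have ls: "ln (softmax (0::real^'k) $ b) = - ln K" for b
          unfolding ln_softmax K_def by simp
        have KlnK: "K * ln K \<ge> 0" using K1 by simp
        have "(1/t) * (K * ln K) \<le> K * ln K" using t0 mult_left_mono[OF t1 KlnK] by (simp add: divide_le_eq mult.commute)
        hence "Jf t r 0 \<ge> - Rmax - K * ln K" unfolding Jf_def ls using rb by (simp add: K_def)
        thus ?thesis unfolding Xb_def by simp
      qed
      have fa: "t^7 * c0 + bb * (Rmax - Jf t r 0) \<le> C0 * t^6"
        unfolding C0_def
        by (rule final_arith[OF t1 Rpos K1 ca0 X]) (simp_all add: bb_def c0_def \<alpha>_def L_def G_def)
      have gpw: "gap r powr (-2/7) \<ge> (2 * Rmax) powr (-2/7)"
        by (rule powr_mono2') (use gp in auto)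
      have one: "(2 * Rmax) powr (2/7) * (2 * Rmax) powr (-2/7) = 1"
        using Rpos by (simp add: powr_add[symmetric])
      have "C0 = C0 * ((2 * Rmax) powr (2/7) * (2 * Rmax) powr (-2/7))" using one by simp
      also have "\<dots> \<le> C0 * ((2 * Rmax) powr (2/7) * gap r powr (-2/7))"
        using gpw C00 Rpos by (intro mult_left_mono) auto
      finally have Cb: "C0 \<le> C * gap r powr (-2/7)" unfolding C_def by (simp add: mult_ac)
      have "exp_regret D (ca * real T powr (-3/7)) (1 * real T powr (1/7)) T 0 \<le> C0 * t^6"
        unfolding alpha_eq eta_eq using main fa tT by simp
      also have "\<dots> \<le> C * gap r powr (-2/7) * t^6" using Cb t0 by (intro mult_right_mono) auto
      finally show "exp_regret D (ca * real T powr (-3/7)) (1 * real T powr (1/7)) T 0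
                \<le> C * gap (mean_reward D) powr (-2/7) * real T powr (6/7)"
        unfolding t6[symmetric] r_def[symmetric] .
    qed
  qed
qed

end
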